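(* Let $D=d$ and let ${\bf v}=\{v_1,\dots,v_d\}$ be linearly independent unit vectors in $\mathbb{R}^d$ such that for every $i\in\{1,\dots,d\}$ the tuple ${\bf v}\setminus i$ is completely irrational, i.e. $\overline{A_{{\bf v}\setminus i}(\mathcal{L}_{{\bf v}\setminus i})}=[0,\infty)^{d-1}$. Then for every $i\in\{1,\dots,d\}$ and all $M,\epsilon>0$ the set $$\Lambda_{M,\epsilon,i}:=\{n\in\mathbb{Z}^D:\ 0<v_k\cdot n<\epsilon\ \forall k\neq i,\ \ v_i\cdot n>M\}$$ is non-empty.
   Context: ${\bf v}\setminus i:=\{v_k\}_{k\ne i}$, $\mathcal{L}_{{\bf v}\setminus i}:=\{n\in\mathbb{Z}^D: v_k\cdot n\ge0\ \forall k\ne i\}$, and $A_{{\bf v}\setminus i}:\mathbb{R}^D\to\mathbb{R}^{d-1}$, $z\mapsto(v_k\cdot z)_{k\ne i}$. *)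

theory Defs
  imports "HOL-Analysis.Analysis"
begin

definition int_lattice :: "(real^'d) set" where
  "int_lattice = {n. \<forall>j. n $ j \<in> \<int>}"

definition lattice_cone :: "('d \<Rightarrow> real^'d) \<Rightarrow> 'd \<Rightarrow> (real^'d) set" where
  "lattice_cone v i = {n \<in> int_lattice. \<forall>k. k \<noteq> i \<longrightarrow> v k \<bullet> n \<ge> 0}"

text \<open>A_{v \ i}: z \<mapsto> (v_k . z)_{k \<noteq> i}. The target R^{d-1} is identified with the
  coordinate hyperplane {x. x $ i = 0} of R^d (the i-th coordinate is set to 0).\<close>
definition A_map :: "('d \<Rightarrow> real^'d) \<Rightarrow> 'd \<Rightarrow> real^'d \<Rightarrow> real^'d" where
  "A_map v i z = (\<chi> k. if k = i then 0 else v k \<bullet> z)"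

definition nonneg_orthant_without :: "'d \<Rightarrow> (real^'d) set" where
  "nonneg_orthant_without i = {x. x $ i = 0 \<and> (\<forall>k. k \<noteq> i \<longrightarrow> x $ k \<ge> 0)}"

definition completely_irrational_without :: "('d \<Rightarrow> real^'d) \<Rightarrow> 'd \<Rightarrow> bool" where
  "completely_irrational_without v i \<longleftrightarrow>
     closure (A_map v i ` lattice_cone v i) = nonneg_orthant_without i"

definition Lambda_set :: "('d \<Rightarrow> real^'d) \<Rightarrow> real \<Rightarrow> real \<Rightarrow> 'd \<Rightarrow> (real^'d) set" where
  "Lambda_set v M \<epsilon> i = {n \<in> int_lattice.
      (\<forall>k. k \<noteq> i \<longrightarrow> 0 < v k \<bullet> n \<and> v k \<bullet> n < \<epsilon>) \<and> v i \<bullet> n > M}"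

end

theory Submission
  imports Defs
begin
lemma span_all:
  fixes v :: "'d::finite \<Rightarrow> real^'d"
  assumes inj: "inj v" and indep: "independent (range v)"
  shows "span (range v) = UNIV"
proof -
  have "card (range v) = CARD('d)" using inj by (simp add: card_image)
  hence "dim (UNIV::(real^'d) set) \<le> card (range v)" by simp
  thus ?thesis using card_ge_dim_independent[of "range v" UNIV] indep by auto
qed

lemma finite_bounded_lattice:
  fixes v :: "'d::finite \<Rightarrow> real^'d"
  assumes inj: "inj v" and indep: "independent (range v)"
  shows "finite {n \<in> int_lattice. \<forall>k. \<bar>v k \<bullet> n\<bar> \<le> R}"
proof -
  define T where "T = (\<lambda>n::real^'d. \<chi> k. v k \<bullet> n)"
  have lin: "linear T" unfolding T_def
    by (auto simp: linear_iff vec_eq_iff inner_add_right)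
  have injT: "inj T"
  proof (rule injI)
    fix x y assume "T x = T y"
    hence "T (x - y) = 0" using linear_diff[OF lin] by simp
    hence o: "\<forall>w\<in>range v. w \<bullet> (x - y) = 0" by (auto simp: T_def vec_eq_iff)
    have "orthogonal (x - y) (x - y)"
      by (rule orthogonal_to_span[of "x - y" "range v"])
         (use o span_all[OF inj indep] in \<open>auto simp: orthogonal_def inner_commute\<close>)
    hence "(x - y) \<bullet> (x - y) = 0" by (simp add: orthogonal_def)
    thus "x = y" by simp
  qed
  obtain B where B: "B > 0" "\<And>x. B * norm x \<le> norm (T x)"
    using linear_inj_bounded_below_pos[OF lin injT] by blast
  define C where "C = CARD('d) * \<bar>R\<bar> / B"
  define F :: "real set" where "F = of_int ` {-\<lceil>C\<rceil>..\<lceil>C\<rceil>}"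
  have sub: "{n \<in> int_lattice. \<forall>k. \<bar>v k \<bullet> n\<bar> \<le> R} \<subseteq> (\<lambda>f. \<chi> j. f j) ` (PiE UNIV (\<lambda>_. F))"
  proof
    fix n assume n: "n \<in> {n \<in> int_lattice. \<forall>k. \<bar>v k \<bullet> n\<bar> \<le> R}"
    have "norm (T n) \<le> (\<Sum>k\<in>UNIV. \<bar>T n $ k\<bar>)" by (rule norm_le_l1_cart)
    also have "\<dots> \<le> (\<Sum>k\<in>(UNIV::'d set). \<bar>R\<bar>)"
    proof (intro sum_mono)
      fix k
      have "\<bar>v k \<bullet> n\<bar> \<le> R" using n by blast
      thus "\<bar>T n $ k\<bar> \<le> \<bar>R\<bar>" unfolding T_def by simp
    qed
    also have "\<dots> = CARD('d) * \<bar>R\<bar>" by simp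
    finally have "B * norm n \<le> CARD('d) * \<bar>R\<bar>" using B(2)[of n] by linarith
    hence nC: "norm n \<le> C" unfolding C_def using B(1) by (simp add: field_simps)
    have "n $ j \<in> F" for j
    proof -
      from n obtain z where z: "n $ j = of_int z" unfolding int_lattice_def by (metis (mono_tags, lifting) Ints_cases mem_Collect_eq)
      have "\<bar>n $ j\<bar> \<le> C" using component_le_norm_cart[of n j] nC by linarith
      hence "\<bar>z\<bar> \<le> \<lceil>C\<rceil>" using z by linarith
      thus ?thesis using z unfolding F_def by (intro image_eqI[of _ _ z]) auto
    qed
    hence "(\<lambda>j. n $ j) \<in> PiE UNIV (\<lambda>_. F)" by auto
    thus "n \<in> (\<lambda>f. \<chi> j. f j) ` (PiE UNIV (\<lambda>_. F))" by (rule rev_image_eqI) simp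
  qed
  show ?thesis
    by (rule finite_subset[OF sub]) (auto intro!: finite_PiE simp: F_def)
qed

lemma unbounded_S:
  fixes v :: "'d::finite \<Rightarrow> real^'d"
  assumes inj: "inj v" and indep: "independent (range v)"
    and unit: "\<And>k. norm (v k) = 1"
    and ci: "completely_irrational_without v i" and dpos: "\<delta> > 0"
  shows "\<exists>n\<in>int_lattice. (\<forall>k. k \<noteq> i \<longrightarrow> 0 < v k \<bullet> n \<and> v k \<bullet> n < \<delta>) \<and> \<bar>v i \<bullet> n\<bar> > R"
proof (rule ccontr)
  define S where "S = {n\<in>int_lattice. \<forall>k. k \<noteq> i \<longrightarrow> 0 < v k \<bullet> n \<and> v k \<bullet> n < \<delta>}"
  assume "\<not> ?thesis"
  hence bnd: "\<And>n. n \<in> S \<Longrightarrow> \<bar>v i \<bullet> n\<bar> \<le> R" unfolding S_def by force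
  have "S \<subseteq> {n \<in> int_lattice. \<forall>k. \<bar>v k \<bullet> n\<bar> \<le> max R \<delta>}"
  proof safe
    fix n k assume n: "n \<in> S"
    thus "n \<in> int_lattice" by (simp add: S_def)
    show "\<bar>v k \<bullet> n\<bar> \<le> max R \<delta>"
    proof (cases "k = i")
      case True thus ?thesis using bnd[OF n] by simp
    next
      case False thus ?thesis using n unfolding S_def by force
    qed
  qed
  hence finS: "finite S" using finite_bounded_lattice[OF inj indep] finite_subset by blast
  show False
  proof (cases "\<exists>j. j \<noteq> i")
    case True
    then obtain j where j: "j \<noteq> i" by blast
    define U where "U = (\<Inter>k\<in>-{i}. {x::real^'d. 0 < x$k} \<inter> {x. x$k < \<delta>})"
    have oU: "open U" unfolding U_def
      by (intro open_INT finite open_Int ballI open_halfspace_component_lt_cart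
            open_halfspace_component_gt_cart)
    have "U \<inter> (A_map v i ` lattice_cone v i) \<subseteq> A_map v i ` S"
    proof
      fix y assume y: "y \<in> U \<inter> (A_map v i ` lattice_cone v i)"
      then obtain n where n: "n \<in> lattice_cone v i" "y = A_map v i n" by blast
      have "n \<in> S" using y n unfolding S_def U_def lattice_cone_def A_map_def by auto
      thus "y \<in> A_map v i ` S" using n by blast
    qed
    hence "closure (U \<inter> (A_map v i ` lattice_cone v i)) \<subseteq> A_map v i ` S"
      using finS by (metis closure_minimal finite_imageI finite_imp_closed)
    hence sub: "U \<inter> nonneg_orthant_without i \<subseteq> A_map v i ` S"
      using open_Int_closure_subset[OF oU, of "A_map v i ` lattice_cone v i"] ci
      unfolding completely_irrational_without_def by blast
    define f :: "real \<Rightarrow> real^'d" where "f = (\<lambda>t. \<chi> k. if k = i then 0 else t)"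
    have "f ` {0<..<\<delta>} \<subseteq> U \<inter> nonneg_orthant_without i"
      unfolding f_def U_def nonneg_orthant_without_def by auto
    moreover have "inj_on f {0<..<\<delta>}"
    proof
      fix s t assume "f s = f t"
      hence "f s $ j = f t $ j" by simp
      thus "s = t" using j by (simp add: f_def)
    qed
    hence "infinite (f ` {0<..<\<delta>})" using dpos by (simp add: finite_image_iff)
    ultimately have "infinite (A_map v i ` S)" using sub by (meson finite_subset subset_trans)
    thus False using finS by simp
  next
    case False
    hence alli: "\<And>k. k = i" by blast
    have UNIVi: "(UNIV::'d set) = {i}" using alli by auto
    have "v i $ i \<noteq> 0"
    proof
      assume "v i $ i = 0"
      hence "v i = 0" by (metis alli vec_eq_iff zero_index)
      thus False using unit[of i] by simp
    qed
    hence a: "\<bar>v i $ i\<bar> > 0" by simp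
    define N where "N = \<lceil>\<bar>R\<bar> / \<bar>v i $ i\<bar>\<rceil> + 1"
    define n :: "real^'d" where "n = (\<chi> k. real_of_int N)"
    have nS: "n \<in> S" unfolding S_def int_lattice_def n_def using alli by auto
    have "v i \<bullet> n = v i $ i * N" unfolding inner_vec_def UNIVi n_def by simp
    moreover have "\<bar>R\<bar> / \<bar>v i $ i\<bar> < N" unfolding N_def by linarith
    hence "\<bar>R\<bar> < \<bar>v i $ i\<bar> * N" using a by (simp add: field_simps)
    moreover have "\<bar>R\<bar> / \<bar>v i $ i\<bar> \<ge> 0" by simp
    hence "N > 0" unfolding N_def by linarith
    ultimately have "\<bar>v i \<bullet> n\<bar> > R" by (simp add: abs_mult)
    thus False using bnd[OF nS] by simp
  qed
qed

theorem mainTheorem17: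
  fixes v :: "'d::finite \<Rightarrow> real^'d"
  assumes inj: "inj v"
    and indep: "independent (range v)"
    and unit: "\<And>k. norm (v k) = 1"
    and ci: "\<And>i. completely_irrational_without v i"
  shows "\<forall>i M \<epsilon>. M > 0 \<longrightarrow> \<epsilon> > 0 \<longrightarrow> Lambda_set v M \<epsilon> i \<noteq> {}"
proof (intro allI impI)
  fix i and M \<epsilon> :: real assume M: "M > 0" and e: "\<epsilon> > 0"
  define \<delta> where "\<delta> = \<epsilon> / 4"
  have d: "\<delta> > 0" using e by (simp add: \<delta>_def)
  define x0 :: "real^'d" where "x0 = (\<chi> k. if k = i then 0 else 2 * \<delta>)"
  have "x0 \<in> closure (A_map v i ` lattice_cone v i)"
    using ci[of i] d unfolding completely_irrational_without_def nonneg_orthant_without_def x0_def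
    by auto
  then obtain y where y: "y \<in> A_map v i ` lattice_cone v i" "dist y x0 < \<delta>"
    using d by (meson closure_approachable)
  then obtain m where m: "m \<in> lattice_cone v i" "y = A_map v i m" by blast
  have mb: "\<delta> < v k \<bullet> m \<and> v k \<bullet> m < 3 * \<delta>" if k: "k \<noteq> i" for k
  proof -
    have "\<bar>(y - x0) $ k\<bar> < \<delta>" using component_le_norm_cart[of "y - x0" k] y(2)
      by (simp add: dist_norm)
    thus ?thesis using k m(2) unfolding A_map_def x0_def by auto
  qed
  have mL: "m \<in> int_lattice" using m(1) by (simp add: lattice_cone_def)
  obtain n where n: "n \<in> int_lattice" "\<And>k. k \<noteq> i \<Longrightarrow> 0 < v k \<bullet> n \<and> v k \<bullet> n < \<delta>"
    "\<bar>v i \<bullet> n\<bar> > M + \<bar>v i \<bullet> m\<bar>"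
    using unbounded_S[OF inj indep unit ci d, of i "M + \<bar>v i \<bullet> m\<bar>"] by blast
  show "Lambda_set v M \<epsilon> i \<noteq> {}"
  proof (cases "v i \<bullet> n > 0")
    case True
    have "n \<in> Lambda_set v M \<epsilon> i" unfolding Lambda_set_def using n True \<delta>_def e
      by fastforce
    thus ?thesis by blast
  next
    case False
    have "m - n \<in> int_lattice" using mL n(1) unfolding int_lattice_def by auto
    moreover have "0 < v k \<bullet> (m - n) \<and> v k \<bullet> (m - n) < \<epsilon>" if "k \<noteq> i" for k
      using mb[OF that] n(2)[OF that] \<delta>_def by (simp add: inner_diff_right)
    moreover have "v i \<bullet> (m - n) > M" using n(3) False by (simp add: inner_diff_right)
    ultimately have "m - n \<in> Lambda_set v M \<epsilon> i" unfolding Lambda_set_def by blast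
    thus ?thesis by blast
  qed
qed
end
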